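(* Let $(V_1,\dots,V_n)$ be an $n$-tuple of doubly non-commuting isometries on $H$ and let $T\in B(H)$ commute with the projections $V_i^kV_i^{*k}$ for all $i=1,\dots,n$ and all $k\ge1$ (equivalently, $V_i^k(H)$ reduces $T$ for all such $i,k$). Then for every (possibly empty) $A=\{i_1,\dots,i_l\}\subseteq\{1,\dots,n\}$, every subspace $V_{i_1}^{k_{i_1}}\cdots V_{i_l}^{k_{i_l}}(W_A)$ ($k_{i_1},\dots,k_{i_l}\ge0$) reduces $T$; in particular $W_A$ reduces $T$. Consequently $H_A$ reduces $T$.
   Context: Fix $n\ge1$ and $z_{ij}\in\mathbb T$ ($i\ne j$) with $z_{ji}=\overline{z_{ij}}$; $(V_1,\dots,V_n)$ is doubly non-commuting if the $V_i$ are isometries with $V_i^*V_j=\overline{z_{ij}}V_jV_i^*$ for $i\ne j$. For an isometry $S$: $H^{\mathrm{iso}}(S)=\bigoplus_{k\ge0}S^k(\ker S^* )$, $H^{\mathrm{uni}}(S)=\bigcap_{k\ge0}S^k(H)$. With $A^c$ the complement, $H_A=\bigcap_{i\in A}H^{\mathrm{iso}}(V_i)\cap\bigcap_{i\in A^c}H^{\mathrm{uni}}(V_i)$ (empty intersection $=H$) and $W_A=\bigcap_{(m_j)\in\mathbb N_0^{A^c}}\big(\prod_{j\in A^c}V_j^{m_j}\big)\big(\bigcap_{i\in A}\ker V_i^*\big)$ (empty intersection of kernels $=H$, empty product $=$ identity). It is known that $H_A=\bigoplus_{k}V_{i_1}^{k_{i_1}}\cdots V_{i_l}^{k_{i_l}}(W_A)$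 orthogonally. *)

theory Defs
  imports "HOL-Analysis.Analysis"
begin

class complex_inner = real_normed_vector +
  fixes scaleC :: "complex \<Rightarrow> 'a \<Rightarrow> 'a"
    and cinner :: "'a \<Rightarrow> 'a \<Rightarrow> complex"
  assumes scaleC_of_real: "scaleC (complex_of_real r) x = scaleR r x"
    and scaleC_add_right: "scaleC a (x + y) = scaleC a x + scaleC a y"
    and scaleC_add_left: "scaleC (a + b) x = scaleC a x + scaleC b x"
    and scaleC_scaleC: "scaleC a (scaleC b x) = scaleC (a * b) x"
    and scaleC_one: "scaleC 1 x = x"
    and cinner_commute: "cinner x y = cnj (cinner y x)"
    and cinner_add_left: "cinner (x + y) z = cinner x z + cinner y z"
    and cinner_scaleC_left: "cinner (scaleC a x) y = cnj a * cinner x y"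
    and cinner_ge_zero: "0 \<le> Re (cinner x x)"
    and cinner_eq_zero_iff: "cinner x x = 0 \<longleftrightarrow> x = 0"
    and norm_eq_sqrt_cinner: "norm x = sqrt (Re (cinner x x))"

class chilbert_space = complex_inner + complete_space

definition clinear :: "('a::complex_inner \<Rightarrow> 'b::complex_inner) \<Rightarrow> bool" where
  "clinear f \<longleftrightarrow> (\<forall>x y. f (x + y) = f x + f y) \<and> (\<forall>c x. f (scaleC c x) = scaleC c (f x))"

definition bounded_clinear :: "('a::complex_inner \<Rightarrow> 'b::complex_inner) \<Rightarrow> bool" where
  "bounded_clinear f \<longleftrightarrow> clinear f \<and> (\<exists>K. \<forall>x. norm (f x) \<le> norm x * K)"

definition is_adjoint :: "('a::complex_inner \<Rightarrow> 'a) \<Rightarrow> ('a \<Rightarrow> 'a) \<Rightarrow> bool" where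
  "is_adjoint T S \<longleftrightarrow> (\<forall>x y. cinner (T x) y = cinner x (S y))"

definition isometry :: "('a::complex_inner \<Rightarrow> 'a) \<Rightarrow> bool" where
  "isometry V \<longleftrightarrow> bounded_clinear V \<and> (\<forall>x. norm (V x) = norm x)"

definition kernel :: "('a::complex_inner \<Rightarrow> 'a) \<Rightarrow> 'a set" where
  "kernel S = {x. S x = 0}"

definition cspan :: "'a::complex_inner set \<Rightarrow> 'a set" where
  "cspan M = {\<Sum>x\<in>F. scaleC (c x) x | F c. finite F \<and> F \<subseteq> M}"

definition ccspan :: "'a::complex_inner set \<Rightarrow> 'a set" where
  "ccspan M = closure (cspan M)"

definition orth :: "'a::complex_inner set \<Rightarrow> 'a set" where
  "orth M = {y. \<forall>x\<in>M. cinner x y = 0}"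

definition reduces :: "'a::complex_inner set \<Rightarrow> ('a \<Rightarrow> 'a) \<Rightarrow> bool" where
  "reduces M T \<longleftrightarrow> T ` M \<subseteq> M \<and> T ` orth M \<subseteq> orth M"

definition doubly_noncommuting ::
  "nat \<Rightarrow> (nat \<Rightarrow> nat \<Rightarrow> complex) \<Rightarrow> (nat \<Rightarrow> 'a::complex_inner \<Rightarrow> 'a) \<Rightarrow> (nat \<Rightarrow> 'a \<Rightarrow> 'a) \<Rightarrow> bool" where
  "doubly_noncommuting n z V Vs \<longleftrightarrow>
     (\<forall>i\<in>{1..n}. isometry (V i) \<and> bounded_clinear (Vs i) \<and> is_adjoint (V i) (Vs i)) \<and>
     (\<forall>i\<in>{1..n}. \<forall>j\<in>{1..n}. i \<noteq> j \<longrightarrow>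
        cmod (z i j) = 1 \<and> z j i = cnj (z i j) \<and>
        (\<forall>x. Vs i (V j x) = scaleC (cnj (z i j)) (V j (Vs i x))))"

definition H_iso :: "('a::complex_inner \<Rightarrow> 'a) \<Rightarrow> ('a \<Rightarrow> 'a) \<Rightarrow> 'a set" where
  "H_iso S Ss = ccspan (\<Union>k. (S ^^ k) ` kernel Ss)"

definition H_uni :: "('a::complex_inner \<Rightarrow> 'a) \<Rightarrow> 'a set" where
  "H_uni S = (\<Inter>k. range (S ^^ k))"

definition H_A :: "nat \<Rightarrow> (nat \<Rightarrow> 'a::complex_inner \<Rightarrow> 'a) \<Rightarrow> (nat \<Rightarrow> 'a \<Rightarrow> 'a) \<Rightarrow> nat set \<Rightarrow> 'a set" where
  "H_A n V Vs A = (\<Inter>i\<in>A. H_iso (V i) (Vs i)) \<inter> (\<Inter>i\<in>{1..n} - A. H_uni (V i))"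

definition prod_pow :: "(nat \<Rightarrow> 'a \<Rightarrow> 'a) \<Rightarrow> nat set \<Rightarrow> (nat \<Rightarrow> nat) \<Rightarrow> 'a \<Rightarrow> 'a" where
  "prod_pow V B m = foldr (\<lambda>j f. (V j ^^ m j) \<circ> f) (sorted_list_of_set B) id"

definition W_A :: "nat \<Rightarrow> (nat \<Rightarrow> 'a::complex_inner \<Rightarrow> 'a) \<Rightarrow> (nat \<Rightarrow> 'a \<Rightarrow> 'a) \<Rightarrow> nat set \<Rightarrow> 'a set" where
  "W_A n V Vs A = (\<Inter>m::nat \<Rightarrow> nat. prod_pow V ({1..n} - A) m ` (\<Inter>i\<in>A. kernel (Vs i)))"

end

theory Submission
  imports Defs
begin


lemma cinner_add_right: "cinner x (y + z) = cinner x y + cinner (x::'a::complex_inner) z"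
  by (metis cinner_commute cinner_add_left complex_cnj_add)

lemma cinner_scaleC_right: "cinner x (scaleC a y) = a * cinner (x::'a::complex_inner) y"
  by (metis cinner_commute cinner_scaleC_left complex_cnj_cnj complex_cnj_mult)

lemma scaleC_zero_left[simp]: "scaleC 0 (x::'a::complex_inner) = 0"
  using scaleC_of_real[of 0 x] by simp

lemma scaleC_zero_right[simp]: "scaleC a (0::'a::complex_inner) = 0"
proof -
  have "scaleC a 0 = scaleC a 0 + scaleC a (0::'a)" using scaleC_add_right[of a 0 0] by simp
  thus ?thesis by simp
qed

lemma scaleC_minus1: "scaleC (-1) (x::'a::complex_inner) = - x"
  using scaleC_of_real[of "-1" x] by simp

lemma scaleC_minus_right: "scaleC a (- x) = - scaleC a (x::'a::complex_inner)"
proof -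
  have "scaleC a (- x) + scaleC a x = 0" using scaleC_add_right[of a "-x" x] by simp
  thus ?thesis by (simp add: eq_neg_iff_add_eq_0)
qed

lemma scaleC_diff_right: "scaleC a (x - y) = scaleC a x - scaleC a (y::'a::complex_inner)"
  using scaleC_add_right[of a x "-y"] by (simp add: scaleC_minus_right)

lemma scaleC_diff_left: "scaleC (a - b) x = scaleC a x - scaleC b (x::'a::complex_inner)"
proof -
  have "scaleC (a - b) x + scaleC b x = scaleC a x" using scaleC_add_left[of "a-b" b x] by simp
  thus ?thesis by (simp add: eq_diff_eq)
qed

lemma cinner_zero_left[simp]: "cinner 0 (y::'a::complex_inner) = 0"
proof -
  have "cinner 0 y = cinner 0 y + cinner 0 y" using cinner_add_left[of 0 0 y] by simp
  thus ?thesis by simp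
qed

lemma cinner_zero_right[simp]: "cinner (y::'a::complex_inner) 0 = 0"
  using cinner_commute[of y 0] by simp

lemma cinner_minus_left: "cinner (- x) (y::'a::complex_inner) = - cinner x y"
proof -
  have "cinner (- x) y + cinner x y = 0" using cinner_add_left[of "-x" x y] by simp
  thus ?thesis by (simp add: eq_neg_iff_add_eq_0)
qed

lemma cinner_minus_right: "cinner y (- x::'a::complex_inner) = - cinner y x"
  using cinner_commute[of y "-x"] cinner_commute[of x y] by (simp add: cinner_minus_left)

lemma cinner_diff_left: "cinner (x - z) (y::'a::complex_inner) = cinner x y - cinner z y"
  using cinner_add_left[of x "-z" y] by (simp add: cinner_minus_left)

lemma cinner_diff_right: "cinner y (x - z::'a::complex_inner) = cinner y x - cinner y z"
  using cinner_add_right[of y x "-z"] by (simp add: cinner_minus_right)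


lemma cinner_self: "cinner x x = complex_of_real ((norm (x::'a::complex_inner))^2)"
proof -
  have "cinner x x = cnj (cinner x x)" by (rule cinner_commute)
  hence "Im (cinner x x) = 0" by (metis Reals_cnj_iff complex_is_Real_iff)
  moreover have "Re (cinner x x) = (norm x)^2"
    using norm_eq_sqrt_cinner[of x] cinner_ge_zero[of x] by simp
  ultimately show ?thesis by (simp add: complex_eq_iff)
qed

lemma cinner_ext0: "(\<And>y. cinner y x = 0) \<Longrightarrow> (x::'a::complex_inner) = 0"
  using cinner_eq_zero_iff by blast

lemma cinner_ext: "(\<And>y. cinner y a = cinner y b) \<Longrightarrow> (a::'a::complex_inner) = b"
proof -
  assume h: "\<And>y. cinner y a = cinner y b"
  have "a - b = 0" by (rule cinner_ext0) (simp add: cinner_diff_right h)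
  thus ?thesis by simp
qed

lemma norm_scaleC: "norm (scaleC a x) = cmod a * norm (x::'a::complex_inner)"
proof -
  have "cinner (scaleC a x) (scaleC a x) = cnj a * a * cinner x x"
    by (simp add: cinner_scaleC_left cinner_scaleC_right)
  hence "complex_of_real ((norm (scaleC a x))^2) = cnj a * a * complex_of_real ((norm x)^2)"
    by (simp only: cinner_self)
  also have "cnj a * a = complex_of_real ((cmod a)^2)"
    by (metis complex_norm_square mult.commute)
  finally have "complex_of_real ((norm (scaleC a x))^2) = complex_of_real (((cmod a) * norm x)^2)"
    by (simp only: power_mult_distrib of_real_mult)
  hence "(norm (scaleC a x))^2 = ((cmod a) * norm x)^2" by (simp only: of_real_eq_iff)
  thus ?thesis by (simp add: power2_eq_iff_nonneg)
qed

lemma cauchy_schwarz: "cmod (cinner x y) \<le> norm x * norm (y::'a::complex_inner)"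
proof (cases "y = 0")
  case True thus ?thesis by simp
next
  case False
  define t where "t = cinner y x / cinner y y"
  have yy: "cinner y y = complex_of_real ((norm y)^2)" by (rule cinner_self)
  have ny: "norm y > 0" using False by simp
  have xy: "cinner x y = cnj (cinner y x)" by (rule cinner_commute)
  have mc: "cinner y x * cnj (cinner y x) = (complex_of_real (cmod (cinner y x)))^2"
    by (metis complex_norm_square of_real_power)
  have ex: "cinner (x - scaleC t y) (x - scaleC t y) =
     cinner x x - t * cinner x y - cnj t * cinner y x + cnj t * t * cinner y y"
    by (simp add: cinner_diff_left cinner_diff_right cinner_scaleC_left cinner_scaleC_right algebra_simps)
  have f1: "t * cinner x y = (cmod (cinner y x))^2 / (norm y)^2"
    unfolding t_def yy xy using mc by (simp add: field_simps)
  have f2: "cnj t * cinner y x = (cmod (cinner y x))^2 / (norm y)^2"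
    unfolding t_def yy using mc by (simp add: field_simps)
  have f3: "cnj t * t * cinner y y = (cmod (cinner y x))^2 / (norm y)^2"
    unfolding t_def yy using ny using mc by (simp add: field_simps power2_eq_square)
  have "cinner (x - scaleC t y) (x - scaleC t y) = complex_of_real ((norm x)^2 - (cmod (cinner y x))^2 / (norm y)^2)"
    unfolding ex f1 f2 f3 cinner_self[of x] by simp
  hence "0 \<le> (norm x)^2 - (cmod (cinner y x))^2 / (norm y)^2"
    using cinner_ge_zero[of "x - scaleC t y"] by simp
  hence "(cmod (cinner y x))^2 \<le> (norm x * norm y)^2" using ny
    by (simp add: field_simps power_mult_distrib)
  hence "cmod (cinner y x) \<le> norm x * norm y"
    by (simp add: power2_le_iff_abs_le)
  thus ?thesis by (metis xy complex_mod_cnj)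
qed



lemma clinear_add: "clinear f \<Longrightarrow> f (x + y) = f x + f y"
  unfolding clinear_def by blast
lemma clinear_scaleC: "clinear f \<Longrightarrow> f (scaleC c x) = scaleC c (f x)"
  unfolding clinear_def by blast
lemma clinear_zero: "clinear f \<Longrightarrow> f 0 = 0"
  using clinear_scaleC[of f 0 0] by simp
lemma clinear_minus: "clinear f \<Longrightarrow> f (- x) = - f x"
  using clinear_scaleC[of f "-1" x] by (simp add: scaleC_minus1)
lemma clinear_diff: "clinear f \<Longrightarrow> f (x - y) = f x - f y"
  using clinear_add[of f x "-y"] by (simp add: clinear_minus)

lemma clinear_scaleR: "clinear f \<Longrightarrow> f (scaleR r x) = scaleR r (f x)"
  using clinear_scaleC[of f "complex_of_real r" x] by (simp add: scaleC_of_real)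

lemma clinear_comp: "clinear f \<Longrightarrow> clinear g \<Longrightarrow> clinear (f \<circ> g)"
  unfolding clinear_def by simp

lemma clinear_id: "clinear id"
  unfolding clinear_def by simp

lemma clinear_funpow: "clinear (f::'a::complex_inner\<Rightarrow>'a) \<Longrightarrow> clinear (f ^^ k)"
  by (induction k) (simp_all add: clinear_id clinear_comp)

lemma bounded_clinear_linear: "bounded_clinear f \<Longrightarrow> bounded_linear f"
proof -
  assume h: "bounded_clinear f"
  hence l: "clinear f" and "\<exists>K. \<forall>x. norm (f x) \<le> norm x * K" unfolding bounded_clinear_def by auto
  then obtain K where K: "\<And>x. norm (f x) \<le> norm x * K" by blast
  show ?thesis by (rule bounded_linear_intro[where K=K]) (auto simp: clinear_add[OF l] clinear_scaleR[OF l] K)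
qed

lemma bounded_linear_funpow: "bounded_linear (f::'a::real_normed_vector\<Rightarrow>'a) \<Longrightarrow> bounded_linear (f ^^ k)"
proof (induction k)
  case 0 thus ?case by (simp add: id_def bounded_linear_ident)
next
  case (Suc k)
  hence "bounded_linear (\<lambda>x. f ((f ^^ k) x))" using bounded_linear_compose by blast
  thus ?case by (simp add: comp_def)
qed

lemma adjoint_funpow:
  fixes V Vs :: "'a::complex_inner \<Rightarrow> 'a"
  assumes "is_adjoint V Vs"
  shows "cinner ((V ^^ k) x) y = cinner x ((Vs ^^ k) y)"
proof (induction k arbitrary: y)
  case 0 thus ?case by simp
next
  case (Suc k)
  have "cinner ((V ^^ Suc k) x) y = cinner (V ((V ^^ k) x)) y" by simp
  also have "\<dots> = cinner ((V ^^ k) x) (Vs y)" using assms unfolding is_adjoint_def by blast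
  also have "\<dots> = cinner x ((Vs ^^ k) (Vs y))" by (rule Suc)
  also have "\<dots> = cinner x ((Vs ^^ Suc k) y)" by (simp add: funpow_swap1)
  finally show ?case .
qed

lemma adjoint_rev: "is_adjoint (V::'a::complex_inner\<Rightarrow>'a) Vs \<Longrightarrow> cinner (Vs x) y = cinner x (V y)"
  unfolding is_adjoint_def by (metis cinner_commute)

lemma isometry_left_inv:
  fixes V Vs :: "'a::complex_inner \<Rightarrow> 'a"
  assumes "isometry V" "is_adjoint V Vs"
  shows "Vs (V x) = x"
proof -
  define u where "u = Vs (V x)"
  have nV: "\<And>y. norm (V y) = norm y" using assms(1) unfolding isometry_def by blast
  have xu: "cinner x u = complex_of_real ((norm x)^2)"
  proof -
    have "cinner (V x) (V x) = cinner x u" using assms(2) unfolding is_adjoint_def u_def by blast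
    thus ?thesis by (simp add: cinner_self nV)
  qed
  have ux: "cinner u x = complex_of_real ((norm x)^2)"
    using xu cinner_commute[of u x] by simp
  have "cinner u u = cinner (V u) (V x)"
    using assms(2) unfolding is_adjoint_def u_def by simp
  hence cu: "cinner (V u) (V x) = complex_of_real ((norm u)^2)" by (simp add: cinner_self)
  have "cmod (cinner (V u) (V x)) \<le> norm (V u) * norm (V x)" by (rule cauchy_schwarz)
  hence "(norm u)^2 \<le> norm u * norm x" unfolding cu nV by (simp only: norm_of_real abs_power2 norm_power)
  hence nu: "norm u \<le> norm x"
  proof -
    assume h: "(norm u)^2 \<le> norm u * norm x"
    show ?thesis
    proof (rule ccontr)
      assume "\<not> norm u \<le> norm x"
      hence "norm u * norm x < norm u * norm u"
        by (intro mult_strict_left_mono) auto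
      thus False using h by (simp add: power2_eq_square)
    qed
  qed
  have "cinner (u - x) (u - x) = complex_of_real ((norm u)^2 - (norm x)^2)"
    by (simp add: cinner_diff_left cinner_diff_right xu ux cinner_self[of u] cinner_self[of x])
  hence "(norm (u - x))^2 = (norm u)^2 - (norm x)^2"
    by (simp only: cinner_self of_real_eq_iff)
  also have "\<dots> \<le> 0" using nu by (simp add: power_mono)
  finally have "u - x = 0" by simp
  thus ?thesis unfolding u_def by simp
qed

lemma isometry_funpow_left_inv:
  fixes V Vs :: "'a::complex_inner \<Rightarrow> 'a"
  assumes "isometry V" "is_adjoint V Vs"
  shows "(Vs ^^ k) ((V ^^ k) x) = x"
proof (induction k arbitrary: x)
  case 0 thus ?case by simp
next
  case (Suc k)
  have "(Vs ^^ Suc k) ((V ^^ Suc k) x) = (Vs ^^ k) (Vs (V ((V ^^ k) x)))"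
    by (simp add: funpow_swap1)
  also have "\<dots> = x" using isometry_left_inv[OF assms] Suc by simp
  finally show ?case .
qed



lemma comm_pow1:
  fixes A B :: "'a::complex_inner \<Rightarrow> 'a"
  assumes "clinear B" "\<And>x. A (B x) = scaleC l (B (A x))"
  shows "A ((B ^^ b) x) = scaleC (l ^ b) ((B ^^ b) (A x))"
proof (induction b)
  case 0 thus ?case by (simp add: scaleC_one)
next
  case (Suc b)
  have "A ((B ^^ Suc b) x) = A (B ((B ^^ b) x))" by simp
  also have "\<dots> = scaleC l (B (A ((B ^^ b) x)))" by (rule assms(2))
  also have "\<dots> = scaleC l (B (scaleC (l ^ b) ((B ^^ b) (A x))))" using Suc by simp
  also have "\<dots> = scaleC (l ^ Suc b) ((B ^^ Suc b) (A x))"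
    by (simp add: clinear_scaleC[OF assms(1)] scaleC_scaleC)
  finally show ?case .
qed

lemma comm_pow:
  fixes A B :: "'a::complex_inner \<Rightarrow> 'a"
  assumes "clinear A" "clinear B" "\<And>x. A (B x) = scaleC l (B (A x))"
  shows "(A ^^ a) ((B ^^ b) x) = scaleC (l ^ (a * b)) ((B ^^ b) ((A ^^ a) x))"
proof (induction a)
  case 0 thus ?case by (simp add: scaleC_one)
next
  case (Suc a)
  have "(A ^^ Suc a) ((B ^^ b) x) = A ((A ^^ a) ((B ^^ b) x))" by simp
  also have "\<dots> = A (scaleC (l ^ (a * b)) ((B ^^ b) ((A ^^ a) x)))" using Suc by simp
  also have "\<dots> = scaleC (l ^ (a * b)) (A ((B ^^ b) ((A ^^ a) x)))"
    by (simp add: clinear_scaleC[OF assms(1)])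
  also have "\<dots> = scaleC (l ^ (a * b)) (scaleC (l ^ b) ((B ^^ b) (A ((A ^^ a) x))))"
    using comm_pow1[where A=A and B=B and l=l, OF assms(2) assms(3)] by simp
  also have "\<dots> = scaleC (l ^ (Suc a * b)) ((B ^^ b) ((A ^^ Suc a) x))"
    by (simp add: scaleC_scaleC power_add mult.commute)
  finally show ?case .
qed

lemma comm_swap:
  fixes A B :: "'a::complex_inner \<Rightarrow> 'a"
  assumes "\<And>x. A (B x) = scaleC l (B (A x))" "l * cnj l = 1"
  shows "B (A x) = scaleC (cnj l) (A (B x))"
  using assms by (simp add: scaleC_scaleC mult.commute scaleC_one)

locale dnc =
  fixes n :: nat and z :: "nat \<Rightarrow> nat \<Rightarrow> complex" and V Vs :: "nat \<Rightarrow> 'a::chilbert_space \<Rightarrow> 'a"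
  assumes dnc: "doubly_noncommuting n z V Vs"
begin

lemma iso: "i \<in> {1..n} \<Longrightarrow> isometry (V i)"
  and bVs: "i \<in> {1..n} \<Longrightarrow> bounded_clinear (Vs i)"
  and adj: "i \<in> {1..n} \<Longrightarrow> is_adjoint (V i) (Vs i)"
  using dnc unfolding doubly_noncommuting_def by auto

lemma linV: "i \<in> {1..n} \<Longrightarrow> clinear (V i)"
  using iso unfolding isometry_def bounded_clinear_def by blast
lemma linVs: "i \<in> {1..n} \<Longrightarrow> clinear (Vs i)"
  using bVs unfolding bounded_clinear_def by blast
lemma blV: "i \<in> {1..n} \<Longrightarrow> bounded_linear (V i)"
  using iso unfolding isometry_def by (blast intro: bounded_clinear_linear)
lemma blVs: "i \<in> {1..n} \<Longrightarrow> bounded_linear (Vs i)"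
  using bVs by (blast intro: bounded_clinear_linear)

lemma linVp: "i \<in> {1..n} \<Longrightarrow> clinear (V i ^^ k)"
  using linV clinear_funpow by blast
lemma linVsp: "i \<in> {1..n} \<Longrightarrow> clinear (Vs i ^^ k)"
  using linVs clinear_funpow by blast
lemma blVp: "i \<in> {1..n} \<Longrightarrow> bounded_linear (V i ^^ k)"
  using blV bounded_linear_funpow by blast
lemma blVsp: "i \<in> {1..n} \<Longrightarrow> bounded_linear (Vs i ^^ k)"
  using blVs bounded_linear_funpow by blast

lemma linv: "i \<in> {1..n} \<Longrightarrow> Vs i (V i x) = x"
  using isometry_left_inv iso adj by blast
lemma linvp: "i \<in> {1..n} \<Longrightarrow> (Vs i ^^ k) ((V i ^^ k) x) = x"
  using isometry_funpow_left_inv iso adj by blast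
lemma adjp: "i \<in> {1..n} \<Longrightarrow> cinner ((V i ^^ k) x) y = cinner x ((Vs i ^^ k) y)"
  using adjoint_funpow adj by blast
lemma adjp': "i \<in> {1..n} \<Longrightarrow> cinner ((Vs i ^^ k) x) y = cinner x ((V i ^^ k) y)"
  using adjp by (metis cinner_commute)

lemma Vinner: "i \<in> {1..n} \<Longrightarrow> cinner (V i x) (V i y) = cinner x y"
  using adj linv unfolding is_adjoint_def by simp

definition c :: "nat \<Rightarrow> nat \<Rightarrow> complex" where "c i j = cnj (z i j)"

lemma c_unit: "i \<in> {1..n} \<Longrightarrow> j \<in> {1..n} \<Longrightarrow> i \<noteq> j \<Longrightarrow> c i j * cnj (c i j) = 1"
proof -
  assume "i \<in> {1..n}" "j \<in> {1..n}" "i \<noteq> j"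
  hence "cmod (z i j) = 1" using dnc unfolding doubly_noncommuting_def by blast
  hence "cmod (c i j) = 1" unfolding c_def by simp
  thus ?thesis by (metis complex_norm_square mult.commute of_real_1 power_one)
qed

lemma R1: "i \<in> {1..n} \<Longrightarrow> j \<in> {1..n} \<Longrightarrow> i \<noteq> j \<Longrightarrow> Vs i (V j x) = scaleC (c i j) (V j (Vs i x))"
  using dnc unfolding doubly_noncommuting_def c_def by blast

lemma R2: "i \<in> {1..n} \<Longrightarrow> j \<in> {1..n} \<Longrightarrow> i \<noteq> j \<Longrightarrow> Vs j (V i x) = scaleC (cnj (c i j)) (V i (Vs j x))"
proof -
  assume a: "i \<in> {1..n}" "j \<in> {1..n}" "i \<noteq> j"
  hence "z j i = cnj (z i j)" using dnc unfolding doubly_noncommuting_def by blast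
  thus ?thesis using R1[of j i x] a unfolding c_def by simp
qed

lemma R3: assumes "i \<in> {1..n}" "j \<in> {1..n}" "i \<noteq> j"
  shows "V j (V i x) = scaleC (c i j) (V i (V j x))"
proof -
  define a where "a = V j (V i x)"
  define b where "b = V i (V j x)"
  have aa: "cinner a a = cinner x x" unfolding a_def using Vinner assms by simp
  have bb: "cinner b b = cinner x x" unfolding b_def using Vinner assms by simp
  have ab: "cinner a b = cnj (c i j) * cinner x x"
  proof -
    have "cinner a b = cinner (V i x) (Vs j (V i (V j x)))"
      unfolding a_def b_def using adj[OF assms(2)] unfolding is_adjoint_def by blast
    also have "\<dots> = cinner (V i x) (scaleC (cnj (c i j)) (V i (Vs j (V j x))))"
      using R2[OF assms] by simp
    also have "\<dots> = cnj (c i j) * cinner x x"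
      using linv[OF assms(2)] Vinner[OF assms(1)] by (simp add: cinner_scaleC_right)
    finally show ?thesis .
  qed
  have ba: "cinner b a = c i j * cinner x x"
    using ab cinner_commute[of b a] cinner_commute[of x x] by simp
  have u: "c i j * cnj (c i j) = 1" using c_unit assms by blast
  have "cinner (a - scaleC (c i j) b) (a - scaleC (c i j) b) =
        cinner a a - c i j * cinner a b - cnj (c i j) * cinner b a + cnj (c i j) * c i j * cinner b b"
    by (simp add: cinner_diff_left cinner_diff_right cinner_scaleC_left cinner_scaleC_right algebra_simps)
  also have "\<dots> = cinner x x * (1 - c i j * cnj (c i j))"
    unfolding aa bb ab ba by (simp add: algebra_simps)
  also have "\<dots> = 0" using u by simp
  finally have "a - scaleC (c i j) b = 0" using cinner_eq_zero_iff by blast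
  thus ?thesis unfolding a_def b_def by simp
qed

lemma R4: assumes "i \<in> {1..n}" "j \<in> {1..n}" "i \<noteq> j"
  shows "Vs i (Vs j x) = scaleC (cnj (c i j)) (Vs j (Vs i x))"
proof (rule cinner_ext)
  fix y
  have "cinner y (Vs i (Vs j x)) = cinner (V j (V i y)) x"
    using adj[OF assms(1)] adj[OF assms(2)] unfolding is_adjoint_def by simp
  also have "\<dots> = cinner (scaleC (c i j) (V i (V j y))) x" using R3[OF assms] by simp
  also have "\<dots> = cnj (c i j) * cinner y (Vs j (Vs i x))"
    using adj[OF assms(1)] adj[OF assms(2)] unfolding is_adjoint_def by (simp add: cinner_scaleC_left)
  also have "\<dots> = cinner y (scaleC (cnj (c i j)) (Vs j (Vs i x)))" by (simp add: cinner_scaleC_right)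
  finally show "cinner y (Vs i (Vs j x)) = cinner y (scaleC (cnj (c i j)) (Vs j (Vs i x)))" .
qed

end


context dnc begin

lemma unit_pow: "i \<in> {1..n} \<Longrightarrow> j \<in> {1..n} \<Longrightarrow> i \<noteq> j \<Longrightarrow> c i j ^ m * cnj (c i j) ^ m = 1"
  using c_unit by (metis power_mult_distrib power_one)

lemma sc_cancel: "mu * nu = 1 \<Longrightarrow> scaleC mu (scaleC nu w) = (w::'a)"
  by (simp add: scaleC_scaleC scaleC_one)

lemma VsV_pow: "i \<in> {1..n} \<Longrightarrow> j \<in> {1..n} \<Longrightarrow> i \<noteq> j \<Longrightarrow>
   (Vs i ^^ a) ((V j ^^ b) x) = scaleC (c i j ^ (a * b)) ((V j ^^ b) ((Vs i ^^ a) x))"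
  by (rule comm_pow) (auto intro: linV linVs R1)

lemma VV_pow: assumes "i \<in> {1..n}" "j \<in> {1..n}" "i \<noteq> j"
  shows "(V i ^^ a) ((V j ^^ b) x) = scaleC (cnj (c i j) ^ (a * b)) ((V j ^^ b) ((V i ^^ a) x))"
proof (rule comm_pow)
  show "clinear (V i)" "clinear (V j)" using assms linV by auto
  fix y show "V i (V j y) = scaleC (cnj (c i j)) (V j (V i y))"
    by (rule comm_swap[where A="V j" and B="V i"]) (use R3[OF assms] c_unit[OF assms] in auto)
qed

lemma VsVs_pow: assumes "i \<in> {1..n}" "j \<in> {1..n}" "i \<noteq> j"
  shows "(Vs i ^^ a) ((Vs j ^^ b) x) = scaleC (cnj (c i j) ^ (a * b)) ((Vs j ^^ b) ((Vs i ^^ a) x))"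
  by (rule comm_pow) (use assms in \<open>auto intro: linVs R4\<close>)

lemma VVs_pow: assumes "i \<in> {1..n}" "j \<in> {1..n}" "i \<noteq> j"
  shows "(V i ^^ a) ((Vs j ^^ b) x) = scaleC (c i j ^ (a * b)) ((Vs j ^^ b) ((V i ^^ a) x))"
proof (rule comm_pow)
  show "clinear (V i)" "clinear (Vs j)" using assms linV linVs by auto
  fix y
  have u: "cnj (c i j) * cnj (cnj (c i j)) = 1" using c_unit[OF assms] by (simp add: mult.commute)
  show "V i (Vs j y) = scaleC (c i j) (Vs j (V i y))"
    using comm_swap[where A="Vs j" and B="V i" and l="cnj (c i j)", OF R2[OF assms] u] by simp
qed

definition P :: "nat \<Rightarrow> nat \<Rightarrow> 'a \<Rightarrow> 'a" where "P i k = (V i ^^ k) \<circ> (Vs i ^^ k)"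

lemma P_apply: "P i k x = (V i ^^ k) ((Vs i ^^ k) x)" unfolding P_def by simp

lemma P_V: assumes "i \<in> {1..n}" "j \<in> {1..n}" "i \<noteq> j"
  shows "P i a ((V j ^^ b) x) = (V j ^^ b) (P i a x)"
proof -
  have "P i a ((V j ^^ b) x) = (V i ^^ a) (scaleC (c i j ^ (a * b)) ((V j ^^ b) ((Vs i ^^ a) x)))"
    unfolding P_apply using VsV_pow[OF assms] by simp
  also have "\<dots> = scaleC (c i j ^ (a * b)) ((V i ^^ a) ((V j ^^ b) ((Vs i ^^ a) x)))"
    using clinear_scaleC[OF linVp[OF assms(1)]] by simp
  also have "\<dots> = scaleC (c i j ^ (a * b)) (scaleC (cnj (c i j) ^ (a * b)) ((V j ^^ b) ((V i ^^ a) ((Vs i ^^ a) x))))"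
    using VV_pow[OF assms] by simp
  also have "\<dots> = (V j ^^ b) (P i a x)"
    unfolding P_apply by (rule sc_cancel) (rule unit_pow[OF assms])
  finally show ?thesis .
qed

lemma P_Vs: assumes "i \<in> {1..n}" "j \<in> {1..n}" "i \<noteq> j"
  shows "P i a ((Vs j ^^ b) x) = (Vs j ^^ b) (P i a x)"
proof -
  have "P i a ((Vs j ^^ b) x) = (V i ^^ a) (scaleC (cnj (c i j) ^ (a * b)) ((Vs j ^^ b) ((Vs i ^^ a) x)))"
    unfolding P_apply using VsVs_pow[OF assms] by simp
  also have "\<dots> = scaleC (cnj (c i j) ^ (a * b)) ((V i ^^ a) ((Vs j ^^ b) ((Vs i ^^ a) x)))"
    using clinear_scaleC[OF linVp[OF assms(1)]] by simp
  also have "\<dots> = scaleC (cnj (c i j) ^ (a * b)) (scaleC (c i j ^ (a * b)) ((Vs j ^^ b) ((V i ^^ a) ((Vs i ^^ a) x))))"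
    using VVs_pow[OF assms] by simp
  also have "\<dots> = (Vs j ^^ b) (P i a x)"
    unfolding P_apply by (rule sc_cancel) (use unit_pow[OF assms] in \<open>simp add: mult.commute\<close>)
  finally show ?thesis .
qed

lemma P_P: assumes "i \<in> {1..n}" "j \<in> {1..n}" "i \<noteq> j"
  shows "P i a (P j b x) = P j b (P i a x)"
  unfolding P_apply[of j] using P_V[OF assms] P_Vs[OF assms] by simp

lemma Vs_ker_V: assumes "i \<in> {1..n}" "j \<in> {1..n}" "i \<noteq> j" "Vs i y = 0"
  shows "Vs i ((V j ^^ b) y) = 0"
  using VsV_pow[OF assms(1-3), of 1 b y] assms(4) clinear_zero[OF linVp[OF assms(2)]] by simp

lemma Vs_ker_Vs: assumes "i \<in> {1..n}" "j \<in> {1..n}" "i \<noteq> j" "Vs i y = 0"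
  shows "Vs i ((Vs j ^^ b) y) = 0"
  using VsVs_pow[OF assms(1-3), of 1 b y] assms(4) clinear_zero[OF linVsp[OF assms(2)]] by simp

lemma linP: "i \<in> {1..n} \<Longrightarrow> clinear (P i k)"
  unfolding P_def by (intro clinear_comp linVp linVsp)
lemma blP: "i \<in> {1..n} \<Longrightarrow> bounded_linear (P i k)"
  unfolding P_def comp_def by (intro bounded_linear_compose[OF blVp] blVsp)

lemma P_sa: "i \<in> {1..n} \<Longrightarrow> cinner (P i k x) y = cinner x (P i k y)"
  unfolding P_apply by (simp add: adjp adjp')

lemma P0: "P i 0 x = x" unfolding P_apply by simp

lemma P_le: assumes "i \<in> {1..n}" "a \<le> b"
  shows "P i a (P i b x) = P i b x" "P i b (P i a x) = P i b x"
proof -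
  obtain d where d: "b = a + d" using assms(2) le_Suc_ex by blast
  have "P i a (P i b x) = (V i ^^ a) ((Vs i ^^ a) ((V i ^^ a) ((V i ^^ d) ((Vs i ^^ b) x))))"
    unfolding P_apply d by (simp add: funpow_add)
  also have "\<dots> = P i b x" unfolding P_apply d using linvp[OF assms(1)] by (simp add: funpow_add)
  finally show "P i a (P i b x) = P i b x" .
  have "P i b (P i a x) = (V i ^^ b) ((Vs i ^^ d) ((Vs i ^^ a) ((V i ^^ a) ((Vs i ^^ a) x))))"
    unfolding P_apply d by (simp add: funpow_add add.commute[of a d])
  also have "\<dots> = P i b x" unfolding P_apply d using linvp[OF assms(1)]
    by (simp add: funpow_add add.commute[of a d])
  finally show "P i b (P i a x) = P i b x" .
qed

lemma P_idem: "i \<in> {1..n} \<Longrightarrow> P i k (P i k x) = P i k x"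
  using P_le by blast

lemma P_range: "i \<in> {1..n} \<Longrightarrow> x \<in> range (V i ^^ k) \<longleftrightarrow> P i k x = x"
proof
  assume "i \<in> {1..n}" "x \<in> range (V i ^^ k)"
  then obtain y where "x = (V i ^^ k) y" by blast
  thus "P i k x = x" using linvp \<open>i \<in> {1..n}\<close> unfolding P_apply by simp
next
  assume "P i k x = x" thus "x \<in> range (V i ^^ k)" unfolding P_apply by (metis rangeI)
qed

end


lemma bl_scaleC: "bounded_linear (\<lambda>v::'a::complex_inner. scaleC a v)"
proof (rule bounded_linear_intro[where K="cmod a"])
  fix x y :: 'a show "scaleC a (x + y) = scaleC a x + scaleC a y" by (rule scaleC_add_right)
next
  fix r and x :: 'a
  show "scaleC a (scaleR r x) = scaleR r (scaleC a x)"
  proof -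
    have "scaleC a (scaleR r x) = scaleC a (scaleC (complex_of_real r) x)" by (simp add: scaleC_of_real)
    also have "\<dots> = scaleC (complex_of_real r) (scaleC a x)" by (simp add: scaleC_scaleC mult.commute)
    finally show ?thesis by (simp add: scaleC_of_real)
  qed
next
  fix x :: 'a show "norm (scaleC a x) \<le> norm x * cmod a" by (simp add: norm_scaleC mult.commute)
qed

lemma bl_cinner_left: "bounded_linear (\<lambda>v::'a::complex_inner. cinner v y)"
proof (rule bounded_linear_intro[where K="norm y"])
  fix x z :: 'a show "cinner (x + z) y = cinner x y + cinner z y" by (rule cinner_add_left)
next
  fix r and x :: 'a
  show "cinner (scaleR r x) y = scaleR r (cinner x y)"
    using cinner_scaleC_left[of "complex_of_real r" x y] by (simp add: scaleC_of_real scaleR_conv_of_real)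
next
  fix x :: 'a show "norm (cinner x y) \<le> norm x * norm y" by (rule cauchy_schwarz)
qed

lemma bl_cinner_right: "bounded_linear (\<lambda>v::'a::complex_inner. cinner y v)"
proof (rule bounded_linear_intro[where K="norm y"])
  fix x z :: 'a show "cinner y (x + z) = cinner y x + cinner y z" by (rule cinner_add_right)
next
  fix r and x :: 'a
  show "cinner y (scaleR r x) = scaleR r (cinner y x)"
    using cinner_scaleC_right[of y "complex_of_real r" x] by (simp add: scaleC_of_real scaleR_conv_of_real)
next
  fix x :: 'a show "norm (cinner y x) \<le> norm x * norm y" using cauchy_schwarz[of y x] by (simp add: mult.commute)
qed

context dnc begin

lemma P_pyth: assumes "i \<in> {1..n}" "a \<le> b"
  shows "(norm (P i a x - P i b x))^2 = (norm (P i a x))^2 - (norm (P i b x))^2"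
proof -
  have ab: "cinner (P i a x) (P i b x) = cinner x (P i b x)"
    using P_sa[OF assms(1), of a x "P i b x"] P_le[OF assms] by simp
  have ba: "cinner (P i b x) (P i a x) = cinner x (P i b x)"
    using P_sa[OF assms(1), of b x "P i a x"] P_le[OF assms] by simp
  have bb: "cinner (P i b x) (P i b x) = cinner x (P i b x)"
    using P_sa[OF assms(1), of b x "P i b x"] P_idem[OF assms(1)] by simp
  have "cinner (P i a x - P i b x) (P i a x - P i b x) = cinner (P i a x) (P i a x) - cinner (P i b x) (P i b x)"
    by (simp add: cinner_diff_left cinner_diff_right ab ba bb)
  thus ?thesis by (simp only: cinner_self flip: of_real_diff) (simp only: of_real_eq_iff)
qed

lemma P_norm_mono: assumes "i \<in> {1..n}" "a \<le> b" shows "norm (P i b x) \<le> norm (P i a x)"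
proof -
  have "0 \<le> (norm (P i a x))^2 - (norm (P i b x))^2" using P_pyth[OF assms, of x] zero_le_power2[of "norm (P i a x - P i b x)"] by linarith
  thus ?thesis by (simp add: power2_le_iff_abs_le)
qed

lemma P_norm_le: "i \<in> {1..n} \<Longrightarrow> norm (P i a x) \<le> norm x"
  using P_norm_mono[of i 0 a x] by (simp add: P0)

lemma P_conv: assumes "i \<in> {1..n}" shows "convergent (\<lambda>m. P i m x)"
proof -
  define r where "r m = (norm (P i m x))^2" for m
  have "decseq r" unfolding r_def decseq_def using P_norm_mono[OF assms] by (simp add: power_mono)
  moreover have "\<forall>m. 0 \<le> r m" unfolding r_def by simp
  ultimately obtain L where "r \<longlonglongrightarrow> L" using decseq_convergent by blast
  hence Cr: "Cauchy r" using convergent_Cauchy convergentI by blast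
  have "Cauchy (\<lambda>m. P i m x)"
  proof (rule CauchyI)
    fix e :: real assume e: "0 < e"
    then obtain M where M: "\<forall>m\<ge>M. \<forall>k\<ge>M. norm (r m - r k) < e^2"
      using CauchyD[OF Cr, of "e^2"] by auto
    have "norm (P i m x - P i k x) < e" if "m \<ge> M" "k \<ge> M" for m k
    proof -
      have key: "(norm (P i m x - P i k x))^2 \<le> \<bar>r m - r k\<bar>"
      proof (cases "m \<le> k")
        case True thus ?thesis using P_pyth[OF assms True, of x] unfolding r_def by simp
      next
        case False
        hence "k \<le> m" by simp
        from P_pyth[OF assms this, of x] show ?thesis unfolding r_def
          by (simp add: norm_minus_commute)
      qed
      have "\<bar>r m - r k\<bar> < e^2" using M that by simp
      hence "(norm (P i m x - P i k x))^2 < e^2" using key by simp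
      thus ?thesis using e by (simp add: power_less_imp_less_base)
    qed
    thus "\<exists>M. \<forall>m\<ge>M. \<forall>k\<ge>M. norm (P i m x - P i k x) < e" by blast
  qed
  thus ?thesis by (rule Cauchy_convergent)
qed

lemma P_comm_same: assumes "i \<in> {1..n}" shows "P i a (P i b x) = P i b (P i a x)"
proof (cases "a \<le> b")
  case True thus ?thesis using P_le[OF assms True] by simp
next
  case False hence ba: "b \<le> a" by simp
  show ?thesis using P_le[OF assms ba] by simp
qed

definition U :: "nat \<Rightarrow> 'a \<Rightarrow> 'a" where "U i x = lim (\<lambda>m. P i m x)"

lemma U_lim: "i \<in> {1..n} \<Longrightarrow> (\<lambda>m. P i m x) \<longlonglongrightarrow> U i x"
  unfolding U_def using P_conv convergent_LIMSEQ_iff by blast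

lemma comm_U: assumes "i \<in> {1..n}" "bounded_linear S" "\<And>m x. S (P i m x) = P i m (S x)"
  shows "S (U i x) = U i (S x)"
proof -
  have "(\<lambda>m. S (P i m x)) \<longlonglongrightarrow> S (U i x)"
    by (rule bounded_linear.tendsto[OF assms(2) U_lim[OF assms(1)]])
  hence "(\<lambda>m. P i m (S x)) \<longlonglongrightarrow> S (U i x)" using assms(3) by simp
  thus ?thesis using U_lim[OF assms(1)] LIMSEQ_unique by blast
qed

lemma U_add: assumes "i \<in> {1..n}" shows "U i (x + y) = U i x + U i y"
proof -
  have "(\<lambda>m. P i m x + P i m y) \<longlonglongrightarrow> U i x + U i y"
    by (intro tendsto_add U_lim assms)
  hence "(\<lambda>m. P i m (x + y)) \<longlonglongrightarrow> U i x + U i y"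
    using clinear_add[OF linP[OF assms]] by simp
  thus ?thesis using U_lim[OF assms] LIMSEQ_unique by blast
qed

lemma U_scaleC: assumes "i \<in> {1..n}" shows "U i (scaleC a x) = scaleC a (U i x)"
proof -
  have "(\<lambda>m. scaleC a (P i m x)) \<longlonglongrightarrow> scaleC a (U i x)"
    by (rule bounded_linear.tendsto[OF bl_scaleC U_lim[OF assms]])
  hence "(\<lambda>m. P i m (scaleC a x)) \<longlonglongrightarrow> scaleC a (U i x)"
    using clinear_scaleC[OF linP[OF assms]] by simp
  thus ?thesis using U_lim[OF assms] LIMSEQ_unique by blast
qed

lemma U_norm: assumes "i \<in> {1..n}" shows "norm (U i x) \<le> norm x"
proof -
  have "(\<lambda>m. norm (P i m x)) \<longlonglongrightarrow> norm (U i x)" by (intro tendsto_norm U_lim assms)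
  thus ?thesis by (rule LIMSEQ_le_const2) (use P_norm_le[OF assms] in auto)
qed

lemma linU: "i \<in> {1..n} \<Longrightarrow> clinear (U i)"
  unfolding clinear_def using U_add U_scaleC by blast

lemma blU: "i \<in> {1..n} \<Longrightarrow> bounded_linear (U i)"
  by (rule bounded_linear_intro[where K=1]) (auto simp: U_add clinear_scaleR[OF linU] U_norm)

lemma U_sa: assumes "i \<in> {1..n}" shows "cinner (U i x) y = cinner x (U i y)"
proof -
  have "(\<lambda>m. cinner (P i m x) y) \<longlonglongrightarrow> cinner (U i x) y"
    by (rule bounded_linear.tendsto[OF bl_cinner_left U_lim[OF assms]])
  moreover have "(\<lambda>m. cinner x (P i m y)) \<longlonglongrightarrow> cinner x (U i y)"
    by (rule bounded_linear.tendsto[OF bl_cinner_right U_lim[OF assms]])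
  ultimately show ?thesis using P_sa[OF assms] LIMSEQ_unique by simp
qed

lemma U_P: assumes "i \<in> {1..n}" shows "U i (P i m x) = U i x"
proof -
  have "(\<lambda>k. P i (k + m) x) \<longlonglongrightarrow> U i x" using LIMSEQ_ignore_initial_segment[OF U_lim[OF assms]] .
  moreover have "(\<lambda>k. P i (k + m) (P i m x)) \<longlonglongrightarrow> U i (P i m x)"
    using LIMSEQ_ignore_initial_segment[OF U_lim[OF assms]] .
  moreover have "P i (k + m) (P i m x) = P i (k + m) x" for k using P_le[OF assms, of m "k + m"] by simp
  ultimately show ?thesis using LIMSEQ_unique by simp
qed

lemma P_U: assumes "i \<in> {1..n}" shows "P i m (U i x) = U i x"
proof -
  have "P i m (U i x) = U i (P i m x)" by (rule comm_U[OF assms blP[OF assms]]) (rule P_comm_same[OF assms])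
  thus ?thesis using U_P[OF assms] by simp
qed

lemma U_idem: "i \<in> {1..n} \<Longrightarrow> U i (U i x) = U i x"
  using P_U[of i] U_lim[of i "U i x"] LIMSEQ_const_iff[of "U i x"] unfolding U_def by simp

lemma U_fix: assumes "i \<in> {1..n}" shows "U i x = x \<longleftrightarrow> (\<forall>m. P i m x = x)"
proof
  assume h: "U i x = x" show "\<forall>m. P i m x = x" using P_U[OF assms, of _ x] by (simp add: h)
next
  assume "\<forall>m. P i m x = x"
  hence "(\<lambda>m. P i m x) = (\<lambda>m. x)" by simp
  thus "U i x = x" using U_lim[OF assms, of x] LIMSEQ_const_iff[of x "U i x"] by simp
qed

end


section \<open>Families of commuting projections\<close>

definition Fprod :: "(nat \<Rightarrow> 'a \<Rightarrow> 'a) \<Rightarrow> nat list \<Rightarrow> 'a \<Rightarrow> 'a" where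
  "Fprod E L = foldr (\<lambda>j f. E j \<circ> f) L id"

lemma Fprod_Nil[simp]: "Fprod E [] x = x" unfolding Fprod_def by simp
lemma Fprod_Cons[simp]: "Fprod E (j # L) x = E j (Fprod E L x)" unfolding Fprod_def by simp

locale projfam =
  fixes E :: "nat \<Rightarrow> 'a::complex_inner \<Rightarrow> 'a" and J :: "nat set"
  assumes sa: "j \<in> J \<Longrightarrow> cinner (E j x) y = cinner x (E j y)"
    and idem: "j \<in> J \<Longrightarrow> E j (E j x) = E j x"
    and comm: "j \<in> J \<Longrightarrow> k \<in> J \<Longrightarrow> E j (E k x) = E k (E j x)"
begin

lemma F_comm: "set L \<subseteq> J \<Longrightarrow> j \<in> J \<Longrightarrow> E j (Fprod E L x) = Fprod E L (E j x)"
  by (induction L arbitrary: x) (auto simp: comm)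

lemma F_fix: "set L \<subseteq> J \<Longrightarrow> j \<in> set L \<Longrightarrow> E j (Fprod E L x) = Fprod E L x"
proof (induction L arbitrary: x)
  case Nil thus ?case by simp
next
  case (Cons l L)
  show ?case
  proof (cases "j = l")
    case True thus ?thesis using Cons.prems by (simp add: idem)
  next
    case False
    hence "j \<in> set L" using Cons.prems by simp
    hence "E j (Fprod E L x) = Fprod E L x" using Cons by simp
    thus ?thesis using Cons.prems comm[of j l] \<open>j \<in> set L\<close> by auto
  qed
qed

lemma F_id: "(\<forall>j\<in>set L. E j x = x) \<Longrightarrow> Fprod E L x = x"
  by (induction L) auto

lemma F_sa: "set L \<subseteq> J \<Longrightarrow> cinner (Fprod E L x) y = cinner x (Fprod E L y)"
proof (induction L arbitrary: x y)
  case Nil thus ?case by simp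
next
  case (Cons l L)
  have "cinner (Fprod E (l # L) x) y = cinner (Fprod E L x) (E l y)" using Cons.prems by (simp add: sa)
  also have "\<dots> = cinner x (Fprod E L (E l y))" using Cons by simp
  also have "\<dots> = cinner x (Fprod E (l # L) y)" using Cons.prems F_comm[of L l y] by simp
  finally show ?case .
qed

lemma F_T: "(\<And>j x. j \<in> J \<Longrightarrow> T (E j x) = E j (T x)) \<Longrightarrow> set L \<subseteq> J \<Longrightarrow> T (Fprod E L x) = Fprod E L (T x)"
  by (induction L arbitrary: x) auto

lemma reduces_fam:
  assumes "finite J" "clinear T" "\<And>j x. j \<in> J \<Longrightarrow> T (E j x) = E j (T x)"
  shows "reduces {x. \<forall>j\<in>J. E j x = x} T"
proof -
  define M where "M = {x. \<forall>j\<in>J. E j x = x}"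
  obtain L where L: "set L = J" using finite_list[OF assms(1)] by blast
  have FM: "Fprod E L x \<in> M" for x unfolding M_def using F_fix[of L] L by simp
  have Fid: "x \<in> M \<Longrightarrow> Fprod E L x = x" for x unfolding M_def using F_id[of L x] L by simp
  have "T ` M \<subseteq> M" unfolding M_def by (auto simp: assms(3)[symmetric])
  moreover have "T ` orth M \<subseteq> orth M"
  proof
    fix w assume "w \<in> T ` orth M"
    then obtain y where y: "y \<in> orth M" "w = T y" by blast
    have "cinner (Fprod E L y) y = 0" using y(1) FM unfolding orth_def by blast
    hence "cinner (Fprod E L y) (Fprod E L y) = 0"
      using F_sa[of L "Fprod E L y" y] Fid[OF FM[of y]] L cinner_commute[of "Fprod E L y" y] by simp
    hence F0: "Fprod E L y = 0" using cinner_eq_zero_iff by blast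
    have "cinner x w = 0" if "x \<in> M" for x
    proof -
      have "cinner x w = cinner (Fprod E L x) (T y)" using Fid[OF that] y(2) by simp
      also have "\<dots> = cinner x (Fprod E L (T y))" using F_sa L by simp
      also have "\<dots> = cinner x (T (Fprod E L y))" using F_T[of T L y] assms(3) L by simp
      also have "\<dots> = 0" using F0 clinear_zero[OF assms(2)] by simp
      finally show ?thesis .
    qed
    thus "w \<in> orth M" unfolding orth_def by blast
  qed
  ultimately show ?thesis unfolding reduces_def M_def by blast
qed

end

lemma cspan_0: "0 \<in> cspan M"
  unfolding cspan_def by (rule CollectI, rule exI[of _ "{}"]) simp

lemma cspan_gen: "g \<in> M \<Longrightarrow> g \<in> cspan M"
  unfolding cspan_def by (rule CollectI, rule exI[of _ "{g}"], rule exI[of _ "\<lambda>_. 1"]) (simp add: scaleC_one)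

lemma cspan_add: assumes "a \<in> cspan M" "b \<in> cspan M" shows "a + b \<in> cspan M"
proof -
  obtain F1 c1 where 1: "a = (\<Sum>x\<in>F1. scaleC (c1 x) x)" "finite F1" "F1 \<subseteq> M"
    using assms(1) unfolding cspan_def by blast
  obtain F2 c2 where 2: "b = (\<Sum>x\<in>F2. scaleC (c2 x) x)" "finite F2" "F2 \<subseteq> M"
    using assms(2) unfolding cspan_def by blast
  define F where "F = F1 \<union> F2"
  define cc where "cc x = (if x \<in> F1 then c1 x else 0) + (if x \<in> F2 then c2 x else 0)" for x
  have fF: "finite F" unfolding F_def using 1 2 by simp
  have "(\<Sum>x\<in>F. scaleC (cc x) x) = (\<Sum>x\<in>F. (if x \<in> F1 then scaleC (c1 x) x else 0)) + (\<Sum>x\<in>F. (if x \<in> F2 then scaleC (c2 x) x else 0))"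
  proof -
    have "scaleC (cc x) x = (if x \<in> F1 then scaleC (c1 x) x else 0) + (if x \<in> F2 then scaleC (c2 x) x else 0)" for x
      unfolding cc_def by (simp add: scaleC_add_left)
    thus ?thesis by (simp add: sum.distrib)
  qed
  also have "\<dots> = a + b"
  proof -
    have "(\<Sum>x\<in>F. (if x \<in> F1 then scaleC (c1 x) x else 0)) = (\<Sum>x\<in>F \<inter> F1. scaleC (c1 x) x)"
      using sum.inter_restrict[OF fF, of "\<lambda>x. scaleC (c1 x) x" F1] by simp
    also have "F \<inter> F1 = F1" unfolding F_def by blast
    moreover have "(\<Sum>x\<in>F. (if x \<in> F2 then scaleC (c2 x) x else 0)) = (\<Sum>x\<in>F \<inter> F2. scaleC (c2 x) x)"
      using sum.inter_restrict[OF fF, of "\<lambda>x. scaleC (c2 x) x" F2] by simp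
    moreover have "F \<inter> F2 = F2" unfolding F_def by blast
    ultimately show ?thesis unfolding 1 2 by simp
  qed
  finally have "a + b = (\<Sum>x\<in>F. scaleC (cc x) x)" by simp
  moreover have "F \<subseteq> M" unfolding F_def using 1 2 by simp
  ultimately show ?thesis unfolding cspan_def using fF by blast
qed

lemma cspan_sum: "(\<And>k. k < (m::nat) \<Longrightarrow> t k \<in> M) \<Longrightarrow> (\<Sum>k<m. t k) \<in> cspan M"
  by (induction m) (auto intro: cspan_0 cspan_add cspan_gen)



lemma clinear_sum: assumes "clinear f" "finite F" shows "f (\<Sum>x\<in>F. g x) = (\<Sum>x\<in>F. f (g x))"
  using assms(2) by (induction F rule: finite_induct) (auto simp: clinear_zero[OF assms(1)] clinear_add[OF assms(1)])

context dnc begin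

lemma H_uni_char: assumes "i \<in> {1..n}" shows "H_uni (V i) = {x. U i x = x}"
  unfolding H_uni_def using P_range[OF assms] U_fix[OF assms] by auto

lemma U_gen: assumes "i \<in> {1..n}" "Vs i w = 0" shows "U i ((V i ^^ k) w) = 0"
proof -
  have "(Vs i ^^ Suc k) ((V i ^^ k) w) = 0" using linvp[OF assms(1)] assms(2) by simp
  hence "P i (Suc k) ((V i ^^ k) w) = 0" unfolding P_apply using clinear_zero[OF linVp[OF assms(1)]] by (simp del: funpow.simps)
  hence "U i ((V i ^^ k) w) = U i 0" using U_P[OF assms(1), of "Suc k" "(V i ^^ k) w"] by simp
  thus ?thesis using clinear_zero[OF linU[OF assms(1)]] by simp
qed

lemma H_iso_char: assumes "i \<in> {1..n}" shows "H_iso (V i) (Vs i) = {x. U i x = 0}"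
proof -
  define G where "G = (\<Union>k. (V i ^^ k) ` kernel (Vs i))"
  have G0: "U i g = 0" if "g \<in> G" for g
    using that U_gen[OF assms] unfolding G_def kernel_def by auto
  have S0: "U i y = 0" if "y \<in> cspan G" for y
  proof -
    have "\<exists>F cc. y = (\<Sum>x\<in>F. scaleC (cc x) x) \<and> finite F \<and> F \<subseteq> G"
      using that unfolding cspan_def by auto
    then obtain F cc where F: "y = (\<Sum>x\<in>F. scaleC (cc x) x)" "finite F" "F \<subseteq> G" by blast
    have "U i y = (\<Sum>x\<in>F. scaleC (cc x) (U i x))"
      unfolding F(1) using clinear_sum[OF linU[OF assms] F(2)] clinear_scaleC[OF linU[OF assms]] by simp
    also have "\<dots> = 0"
    proof (rule sum.neutral, rule ballI)
      fix x assume "x \<in> F" hence "U i x = 0" using G0 F(3) by blast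
      thus "scaleC (cc x) (U i x) = 0" by simp
    qed
    finally show ?thesis .
  qed
  have "U i y = 0" if hy: "y \<in> closure (cspan G)" for y
  proof -
    obtain s where s: "\<forall>m. s m \<in> cspan G" "s \<longlonglongrightarrow> y" using hy[unfolded closure_sequential] by blast
    have "(\<lambda>m. U i (s m)) \<longlonglongrightarrow> U i y" by (rule bounded_linear.tendsto[OF blU[OF assms] s(2)])
    hence "(\<lambda>m. 0) \<longlonglongrightarrow> U i y" using S0 s(1) by simp
    thus ?thesis using LIMSEQ_const_iff[of 0 "U i y"] by simp
  qed
  moreover have "x \<in> closure (cspan G)" if "U i x = 0" for x
  proof -
    define t where "t k = P i k x - P i (Suc k) x" for k
    have tG: "t k \<in> G" for k
    proof -
      define y where "y = (Vs i ^^ k) x"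
      have "P i (Suc k) x = (V i ^^ k) (V i (Vs i y))"
        unfolding P_apply y_def by (simp add: funpow_swap1)
      hence "t k = (V i ^^ k) (y - V i (Vs i y))"
        unfolding t_def using clinear_diff[OF linVp[OF assms]] by (simp add: P_apply y_def)
      moreover have "Vs i (y - V i (Vs i y)) = 0"
        using clinear_diff[OF linVs[OF assms]] linv[OF assms] by simp
      ultimately have "t k \<in> (V i ^^ k) ` kernel (Vs i)" unfolding kernel_def by blast
      thus ?thesis unfolding G_def by (rule UN_I[OF UNIV_I])
    qed
    have sm: "(\<Sum>k<m. t k) = x - P i m x" for m
      unfolding t_def using sum_lessThan_telescope'[of "\<lambda>k. P i k x" m] by (simp add: P0)
    have "(\<lambda>m. x - P i m x) \<longlonglongrightarrow> x - U i x" by (intro tendsto_diff tendsto_const U_lim assms)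
    hence "(\<lambda>m. (\<Sum>k<m. t k)) \<longlonglongrightarrow> x" using that sm by simp
    moreover have "\<forall>m. (\<Sum>k<m. t k) \<in> cspan G" using tG cspan_sum by blast
    ultimately show ?thesis unfolding closure_sequential by (intro exI[of _ "\<lambda>m. (\<Sum>k<m. t k)"]) simp
  qed
  moreover have "H_iso (V i) (Vs i) = closure (cspan G)" unfolding H_iso_def ccspan_def G_def by simp
  ultimately show ?thesis by blast
qed

end


lemma bl_diff: "bounded_linear f \<Longrightarrow> f (x - y) = f x - f y"
  using bounded_linear.linear linear_diff by metis

context dnc begin

definition Q :: "nat \<Rightarrow> nat \<Rightarrow> 'a \<Rightarrow> 'a" where "Q i a x = P i a x - P i (Suc a) x"
definition D :: "nat \<Rightarrow> 'a \<Rightarrow> 'a" where "D i x = x - U i x"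

lemma blQ: "i \<in> {1..n} \<Longrightarrow> bounded_linear (Q i a)"
  unfolding Q_def[abs_def] by (intro bounded_linear_sub blP)
lemma blD: "i \<in> {1..n} \<Longrightarrow> bounded_linear (D i)"
  unfolding D_def[abs_def] by (intro bounded_linear_sub blU bounded_linear_ident)

lemma comm_gen: assumes "j \<in> {1..n}" "bounded_linear S" "\<And>m x. S (P j m x) = P j m (S x)"
  shows "S (U j x) = U j (S x)" "S (Q j b x) = Q j b (S x)" "S (D j x) = D j (S x)"
proof -
  show u: "S (U j x) = U j (S x)" by (rule comm_U[OF assms])
  show "S (Q j b x) = Q j b (S x)" unfolding Q_def using assms(3) bl_diff[OF assms(2)] by simp
  show "S (D j x) = D j (S x)" unfolding D_def using u bl_diff[OF assms(2)] by simp
qed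

lemma P_comm_other: assumes "i \<in> {1..n}" "j \<in> {1..n}" "i \<noteq> j"
  shows "U i (P j m x) = P j m (U i x)" "Q i a (P j m x) = P j m (Q i a x)" "D i (P j m x) = D i (P j m x)"
    "D i (P j m x) = P j m (D i x)"
proof -
  have c: "\<And>m' y. P j m (P i m' y) = P i m' (P j m y)" using P_P[OF assms(2,1)] assms(3) by auto
  show "U i (P j m x) = P j m (U i x)" "Q i a (P j m x) = P j m (Q i a x)" "D i (P j m x) = P j m (D i x)"
    using comm_gen[OF assms(1) blP[OF assms(2)] c] by auto
  show "D i (P j m x) = D i (P j m x)" ..
qed

lemma Q_sa: "i \<in> {1..n} \<Longrightarrow> cinner (Q i a x) y = cinner x (Q i a y)"
  unfolding Q_def by (simp add: cinner_diff_left cinner_diff_right P_sa)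
lemma D_sa: "i \<in> {1..n} \<Longrightarrow> cinner (D i x) y = cinner x (D i y)"
  unfolding D_def by (simp add: cinner_diff_left cinner_diff_right U_sa)

lemma Q_idem: assumes "i \<in> {1..n}" shows "Q i a (Q i a x) = Q i a x"
proof -
  have "Q i a (Q i a x) = P i a (P i a x) - P i a (P i (Suc a) x) - (P i (Suc a) (P i a x) - P i (Suc a) (P i (Suc a) x))"
    unfolding Q_def using clinear_diff[OF linP[OF assms]] by simp
  also have "\<dots> = Q i a x" unfolding Q_def using P_le[OF assms, of a "Suc a"] P_idem[OF assms] by simp
  finally show ?thesis .
qed

lemma D_idem: assumes "i \<in> {1..n}" shows "D i (D i x) = D i x"
  unfolding D_def using clinear_diff[OF linU[OF assms]] U_idem[OF assms] by simp

end


context dnc begin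

definition pp :: "(nat \<Rightarrow> nat) \<Rightarrow> nat list \<Rightarrow> 'a \<Rightarrow> 'a" where
  "pp m L = foldr (\<lambda>j f. (V j ^^ m j) \<circ> f) L id"

lemma pp_Nil[simp]: "pp m [] x = x" unfolding pp_def by simp
lemma pp_Cons[simp]: "pp m (j # L) x = (V j ^^ m j) (pp m L x)" unfolding pp_def by simp

lemma prod_pow_pp: "prod_pow V B m = pp m (sorted_list_of_set B)"
  unfolding prod_pow_def pp_def ..

lemma Vp_comm: assumes "i \<in> {1..n}" "j \<in> {1..n}" "i \<noteq> j"
  shows "U i ((V j ^^ b) x) = (V j ^^ b) (U i x)" "Q i a ((V j ^^ b) x) = (V j ^^ b) (Q i a x)"
proof -
  have c: "\<And>m y. (V j ^^ b) (P i m y) = P i m ((V j ^^ b) y)" using P_V[OF assms] by simp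
  show "U i ((V j ^^ b) x) = (V j ^^ b) (U i x)" "Q i a ((V j ^^ b) x) = (V j ^^ b) (Q i a x)"
    using comm_gen[OF assms(1) blVp[OF assms(2)] c] by auto
qed

lemma Vsp_comm: assumes "i \<in> {1..n}" "j \<in> {1..n}" "i \<noteq> j"
  shows "U i ((Vs j ^^ b) x) = (Vs j ^^ b) (U i x)" "Q i a ((Vs j ^^ b) x) = (Vs j ^^ b) (Q i a x)"
proof -
  have c: "\<And>m y. (Vs j ^^ b) (P i m y) = P i m ((Vs j ^^ b) y)" using P_Vs[OF assms] by simp
  show "U i ((Vs j ^^ b) x) = (Vs j ^^ b) (U i x)" "Q i a ((Vs j ^^ b) x) = (Vs j ^^ b) (Q i a x)"
    using comm_gen[OF assms(1) blVsp[OF assms(2)] c] by auto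
qed

lemma imgK:
  assumes "A \<subseteq> {1..n}" "distinct L" "set L \<subseteq> {1..n} - A"
  shows "pp m L ` {x. \<forall>i\<in>A. Vs i x = 0} = {x. (\<forall>i\<in>A. Vs i x = 0) \<and> (\<forall>j\<in>set L. P j (m j) x = x)}"
  using assms(2,3)
proof (induction L)
  case Nil thus ?case by (simp add: image_def)
next
  case (Cons j L)
  define b where "b = m j"
  have jI: "j \<in> {1..n}" "j \<notin> A" "j \<notin> set L" using Cons.prems by auto
  have IH: "pp m L ` {x. \<forall>i\<in>A. Vs i x = 0} = {x. (\<forall>i\<in>A. Vs i x = 0) \<and> (\<forall>l\<in>set L. P l (m l) x = x)}"
    using Cons by simp
  have img: "pp m (j # L) ` {x. \<forall>i\<in>A. Vs i x = 0} = (V j ^^ b) ` (pp m L ` {x. \<forall>i\<in>A. Vs i x = 0})"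
    unfolding b_def by (auto simp: image_def)
  show ?case unfolding img IH
  proof (intro equalityI subsetI)
    fix x assume "x \<in> (V j ^^ b) ` {x. (\<forall>i\<in>A. Vs i x = 0) \<and> (\<forall>l\<in>set L. P l (m l) x = x)}"
    then obtain y where y: "x = (V j ^^ b) y" "\<forall>i\<in>A. Vs i y = 0" "\<forall>l\<in>set L. P l (m l) y = y" by blast
    have "\<forall>i\<in>A. Vs i x = 0"
    proof
      fix i assume "i \<in> A"
      hence "i \<in> {1..n}" "i \<noteq> j" using assms(1) jI by auto
      thus "Vs i x = 0" using Vs_ker_V[OF \<open>i \<in> {1..n}\<close> jI(1) \<open>i \<noteq> j\<close>] y \<open>i \<in> A\<close> by simp
    qed
    moreover have "P j (m j) x = x" using P_range[OF jI(1)] y(1) b_def by blast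
    moreover have "P l (m l) x = x" if "l \<in> set L" for l
    proof -
      have "l \<in> {1..n}" "l \<noteq> j" using that Cons.prems jI by auto
      thus ?thesis using P_V[OF \<open>l \<in> {1..n}\<close> jI(1)] y that by simp
    qed
    ultimately show "x \<in> {x. (\<forall>i\<in>A. Vs i x = 0) \<and> (\<forall>l\<in>set (j # L). P l (m l) x = x)}" by simp
  next
    fix x assume x: "x \<in> {x. (\<forall>i\<in>A. Vs i x = 0) \<and> (\<forall>l\<in>set (j # L). P l (m l) x = x)}"
    define y where "y = (Vs j ^^ b) x"
    have e1: "(V j ^^ b) y = x" using x unfolding y_def b_def by (simp add: P_apply)
    have e2: "\<forall>i\<in>A. Vs i y = 0"
    proof
      fix i assume "i \<in> A"
      hence "i \<in> {1..n}" "i \<noteq> j" using assms(1) jI by auto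
      thus "Vs i y = 0" unfolding y_def using Vs_ker_Vs[OF \<open>i \<in> {1..n}\<close> jI(1) \<open>i \<noteq> j\<close>] x \<open>i \<in> A\<close> by simp
    qed
    have e3: "P l (m l) y = y" if "l \<in> set L" for l
    proof -
      have "l \<in> {1..n}" "l \<noteq> j" using that Cons.prems jI by auto
      thus ?thesis using P_Vs[OF \<open>l \<in> {1..n}\<close> jI(1)] x that unfolding y_def by simp
    qed
    show "x \<in> (V j ^^ b) ` {x. (\<forall>i\<in>A. Vs i x = 0) \<and> (\<forall>l\<in>set L. P l (m l) x = x)}"
      by (rule image_eqI[where x=y]) (use e1 e2 e3 in auto)
  qed
qed


lemma Q_of_V: assumes "j \<in> {1..n}" "Vs j y = 0" shows "Q j b ((V j ^^ b) y) = (V j ^^ b) y"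
proof -
  have "P j b ((V j ^^ b) y) = (V j ^^ b) y" using P_range[OF assms(1)] by blast
  moreover have "P j (Suc b) ((V j ^^ b) y) = 0"
  proof -
    have "(Vs j ^^ Suc b) ((V j ^^ b) y) = 0" using linvp[OF assms(1)] assms(2) by simp
    thus ?thesis unfolding P_apply using clinear_zero[OF linVp[OF assms(1)]] by (simp del: funpow.simps)
  qed
  ultimately show ?thesis unfolding Q_def by simp
qed

lemma P_of_Q: assumes "j \<in> {1..n}" "Q j b x = x" shows "P j b x = x"
proof -
  have "P j b x = P j b (Q j b x)" using assms(2) by simp
  also have "\<dots> = Q j b x" unfolding Q_def using clinear_diff[OF linP[OF assms(1)]] P_idem[OF assms(1)] P_le[OF assms(1), of b "Suc b"] by simp
  finally show ?thesis using assms(2) by simp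
qed

lemma Vs_of_Q: assumes "j \<in> {1..n}" "Q j b x = x" shows "Vs j ((Vs j ^^ b) x) = 0"
proof -
  have "Vs j ((Vs j ^^ b) x) = (Vs j ^^ Suc b) (Q j b x)" using assms(2) by simp
  also have "\<dots> = (Vs j ^^ Suc b) (P j b x) - (Vs j ^^ Suc b) (P j (Suc b) x)"
    unfolding Q_def using clinear_diff[OF linVsp[OF assms(1)]] by blast
  also have "(Vs j ^^ Suc b) (P j b x) = (Vs j ^^ Suc b) x"
    unfolding P_apply using linvp[OF assms(1)] by simp
  also have "(Vs j ^^ Suc b) (P j (Suc b) x) = (Vs j ^^ Suc b) x"
    unfolding P_apply using linvp[OF assms(1)] by (simp del: funpow.simps)
  finally show ?thesis by simp
qed

lemma imgW:
  assumes "A \<subseteq> {1..n}" "distinct L" "set L \<subseteq> A"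
  shows "pp k L ` {x. (\<forall>i\<in>A. Vs i x = 0) \<and> (\<forall>j\<in>{1..n} - A. U j x = x)} =
    {x. (\<forall>i\<in>A - set L. Vs i x = 0) \<and> (\<forall>i\<in>set L. Q i (k i) x = x) \<and> (\<forall>j\<in>{1..n} - A. U j x = x)}"
  using assms(2,3)
proof (induction L)
  case Nil thus ?case by (simp add: image_def)
next
  case (Cons j L)
  define b where "b = k j"
  define W0 where "W0 = {x. (\<forall>i\<in>A. Vs i x = 0) \<and> (\<forall>j\<in>{1..n} - A. U j x = x)}"
  have jI: "j \<in> {1..n}" "j \<in> A" "j \<notin> set L" using Cons.prems assms(1) by auto
  have IH: "pp k L ` W0 = {x. (\<forall>i\<in>A - set L. Vs i x = 0) \<and> (\<forall>i\<in>set L. Q i (k i) x = x) \<and> (\<forall>j\<in>{1..n} - A. U j x = x)}"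
    using Cons unfolding W0_def by simp
  have img: "pp k (j # L) ` W0 = (V j ^^ b) ` (pp k L ` W0)"
    unfolding b_def by (auto simp: image_def)
  show ?case unfolding W0_def[symmetric] img IH
  proof (intro equalityI subsetI)
    fix x assume "x \<in> (V j ^^ b) ` {x. (\<forall>i\<in>A - set L. Vs i x = 0) \<and> (\<forall>i\<in>set L. Q i (k i) x = x) \<and> (\<forall>j\<in>{1..n} - A. U j x = x)}"
    then obtain y where y: "x = (V j ^^ b) y" "\<forall>i\<in>A - set L. Vs i y = 0" "\<forall>i\<in>set L. Q i (k i) y = y"
      "\<forall>j\<in>{1..n} - A. U j y = y" by blast
    have a1: "\<forall>i\<in>A - set (j # L). Vs i x = 0"
    proof
      fix i assume "i \<in> A - set (j # L)"
      hence "i \<in> {1..n}" "i \<noteq> j" "i \<in> A - set L" using assms(1) by auto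
      thus "Vs i x = 0" using Vs_ker_V[OF \<open>i \<in> {1..n}\<close> jI(1) \<open>i \<noteq> j\<close>] y by simp
    qed
    have a2: "Q j (k j) x = x" unfolding b_def[symmetric] y(1)
      by (rule Q_of_V[OF jI(1)]) (use y(2) jI in auto)
    have a3: "Q l (k l) x = x" if "l \<in> set L" for l
    proof -
      have "l \<in> {1..n}" "l \<noteq> j" using that assms(1) Cons.prems jI by auto
      thus ?thesis using Vp_comm(2)[OF \<open>l \<in> {1..n}\<close> jI(1)] y that by simp
    qed
    have a4: "U l x = x" if "l \<in> {1..n} - A" for l
    proof -
      have "l \<in> {1..n}" "l \<noteq> j" using that jI by auto
      thus ?thesis using Vp_comm(1)[OF \<open>l \<in> {1..n}\<close> jI(1)] y that by simp
    qed
    show "x \<in> {x. (\<forall>i\<in>A - set (j # L). Vs i x = 0) \<and> (\<forall>i\<in>set (j # L). Q i (k i) x = x) \<and> (\<forall>j\<in>{1..n} - A. U j x = x)}"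
      using a1 a2 a3 a4 by simp
  next
    fix x assume x: "x \<in> {x. (\<forall>i\<in>A - set (j # L). Vs i x = 0) \<and> (\<forall>i\<in>set (j # L). Q i (k i) x = x) \<and> (\<forall>j\<in>{1..n} - A. U j x = x)}"
    define y where "y = (Vs j ^^ b) x"
    have Qx: "Q j b x = x" using x unfolding b_def by simp
    have e1: "(V j ^^ b) y = x" using P_of_Q[OF jI(1) Qx] unfolding y_def P_apply .
    have e2: "\<forall>i\<in>A - set L. Vs i y = 0"
    proof
      fix i assume i: "i \<in> A - set L"
      show "Vs i y = 0"
      proof (cases "i = j")
        case True thus ?thesis unfolding y_def using Vs_of_Q[OF jI(1) Qx] by simp
      next
        case False
        hence "i \<in> {1..n}" "i \<in> A - set (j # L)" using i assms(1) by auto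
        thus ?thesis unfolding y_def using Vs_ker_Vs[OF \<open>i \<in> {1..n}\<close> jI(1) False] x by simp
      qed
    qed
    have e3: "Q l (k l) y = y" if "l \<in> set L" for l
    proof -
      have "l \<in> {1..n}" "l \<noteq> j" using that assms(1) Cons.prems jI by auto
      thus ?thesis using Vsp_comm(2)[OF \<open>l \<in> {1..n}\<close> jI(1)] x that unfolding y_def by simp
    qed
    have e4: "U l y = y" if "l \<in> {1..n} - A" for l
    proof -
      have "l \<in> {1..n}" "l \<noteq> j" using that jI by auto
      thus ?thesis using Vsp_comm(1)[OF \<open>l \<in> {1..n}\<close> jI(1)] x that unfolding y_def by simp
    qed
    show "x \<in> (V j ^^ b) ` {x. (\<forall>i\<in>A - set L. Vs i x = 0) \<and> (\<forall>i\<in>set L. Q i (k i) x = x) \<and> (\<forall>j\<in>{1..n} - A. U j x = x)}"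
      by (rule image_eqI[where x=y]) (use e1 e2 e3 e4 in auto)
  qed
qed

end


context dnc begin

lemma W_char: assumes "A \<subseteq> {1..n}"
  shows "W_A n V Vs A = {x. (\<forall>i\<in>A. Vs i x = 0) \<and> (\<forall>j\<in>{1..n} - A. U j x = x)}"
proof -
  define K where "K = {x. \<forall>i\<in>A. Vs i x = 0}"
  have K: "(\<Inter>i\<in>A. kernel (Vs i)) = K" unfolding K_def kernel_def by auto
  define L where "L = sorted_list_of_set ({1..n} - A)"
  have L: "distinct L" "set L = {1..n} - A" unfolding L_def by auto
  have im: "prod_pow V ({1..n} - A) m ` K = {x. (\<forall>i\<in>A. Vs i x = 0) \<and> (\<forall>j\<in>{1..n} - A. P j (m j) x = x)}" for m
    unfolding prod_pow_pp L_def[symmetric] K_def using imgK[OF assms L(1)] L(2) by simp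
  have "W_A n V Vs A = {x. (\<forall>i\<in>A. Vs i x = 0) \<and> (\<forall>j\<in>{1..n} - A. \<forall>p. P j p x = x)}"
  proof (intro equalityI subsetI)
    fix x assume "x \<in> W_A n V Vs A"
    hence h: "\<And>m. x \<in> prod_pow V ({1..n} - A) m ` K" unfolding W_A_def K by blast
    have "\<forall>i\<in>A. Vs i x = 0" using h[of "\<lambda>_. 0"] im by blast
    moreover have "P j p x = x" if "j \<in> {1..n} - A" for j p
    proof -
      have "x \<in> {x. (\<forall>i\<in>A. Vs i x = 0) \<and> (\<forall>j\<in>{1..n} - A. P j p x = x)}"
        using h[of "\<lambda>_. p"] unfolding im by simp
      thus ?thesis using that by blast
    qed
    ultimately show "x \<in> {x. (\<forall>i\<in>A. Vs i x = 0) \<and> (\<forall>j\<in>{1..n} - A. \<forall>p. P j p x = x)}" by blast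
  next
    fix x assume "x \<in> {x. (\<forall>i\<in>A. Vs i x = 0) \<and> (\<forall>j\<in>{1..n} - A. \<forall>p. P j p x = x)}"
    hence "x \<in> prod_pow V ({1..n} - A) m ` K" for m using im by blast
    thus "x \<in> W_A n V Vs A" unfolding W_A_def K by blast
  qed
  also have "\<dots> = {x. (\<forall>i\<in>A. Vs i x = 0) \<and> (\<forall>j\<in>{1..n} - A. U j x = x)}"
    using U_fix by auto
  finally show ?thesis .
qed

lemma Mk_char: assumes "A \<subseteq> {1..n}"
  shows "prod_pow V A k ` W_A n V Vs A = {x. (\<forall>i\<in>A. Q i (k i) x = x) \<and> (\<forall>j\<in>{1..n} - A. U j x = x)}"
proof -
  have fA: "finite A" using assms finite_subset by blast
  define L where "L = sorted_list_of_set A"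
  have L: "distinct L" "set L = A" unfolding L_def using fA by auto
  show ?thesis unfolding W_char[OF assms] prod_pow_pp L_def[symmetric]
    using imgW[OF assms L(1)] L(2) by simp
qed

lemma HA_char: assumes "A \<subseteq> {1..n}"
  shows "H_A n V Vs A = {x. (\<forall>i\<in>A. D i x = x) \<and> (\<forall>j\<in>{1..n} - A. U j x = x)}"
proof -
  have m1: "x \<in> H_iso (V i) (Vs i) \<longleftrightarrow> U i x = 0" if "i \<in> A" for i x
    using H_iso_char[of i] assms that by auto
  have m2: "x \<in> H_uni (V j) \<longleftrightarrow> U j x = x" if "j \<in> {1..n} - A" for j x
    using H_uni_char[of j] that by auto
  have "H_A n V Vs A = {x. (\<forall>i\<in>A. U i x = 0) \<and> (\<forall>j\<in>{1..n} - A. U j x = x)}"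
    unfolding H_A_def using m1 m2 by auto
  thus ?thesis unfolding D_def by simp
qed

lemma prod_pow_zero: "prod_pow V B (\<lambda>_. 0) = id"
proof -
  have "pp (\<lambda>_. 0) L x = x" for L x by (induction L) auto
  thus ?thesis unfolding prod_pow_pp by auto
qed

lemma main:
  assumes T: "bounded_clinear T" and TP: "\<And>i m x. i \<in> {1..n} \<Longrightarrow> T (P i m x) = P i m (T x)"
    and A: "A \<subseteq> {1..n}"
  shows "(\<forall>k::nat \<Rightarrow> nat. reduces (prod_pow V A k ` W_A n V Vs A) T)
           \<and> reduces (W_A n V Vs A) T
           \<and> reduces (H_A n V Vs A) T"
proof -
  have blT: "bounded_linear T" using T by (rule bounded_clinear_linear)
  have linT: "clinear T" using T unfolding bounded_clinear_def by blast
  have TU: "T (U i x) = U i (T x)" "T (Q i a x) = Q i a (T x)" "T (D i x) = D i (T x)" if "i \<in> {1..n}" for i a x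
    using comm_gen[OF that blT TP[OF that]] by auto
  have Mk: "reduces (prod_pow V A k ` W_A n V Vs A) T" for k
  proof -
    define E where "E i = (if i \<in> A then Q i (k i) else U i)" for i
    have blE: "bounded_linear (E i)" if "i \<in> {1..n}" for i unfolding E_def using that blQ blU by auto
    interpret projfam E "{1..n}"
    proof
      fix j x y assume "j \<in> {1..n}" thus "cinner (E j x) y = cinner x (E j y)"
        unfolding E_def using Q_sa U_sa by auto
    next
      fix j x assume "j \<in> {1..n}" thus "E j (E j x) = E j x"
        unfolding E_def using Q_idem U_idem by auto
    next
      fix j l x assume jl: "j \<in> {1..n}" "l \<in> {1..n}"
      show "E j (E l x) = E l (E j x)"
      proof (cases "j = l")
        case True thus ?thesis by simp
      next
        case False
        have c: "\<And>m y. E j (P l m y) = P l m (E j y)"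
          unfolding E_def using P_comm_other[OF jl(1) jl(2) False] by auto
        show ?thesis using comm_gen[OF jl(2) blE[OF jl(1)] c] unfolding E_def[of l] by auto
      qed
    qed
    have "reduces {x. \<forall>j\<in>{1..n}. E j x = x} T"
      by (rule reduces_fam[OF _ linT]) (auto simp: E_def TU)
    moreover have "{x. \<forall>j\<in>{1..n}. E j x = x} = prod_pow V A k ` W_A n V Vs A"
      unfolding Mk_char[OF A] E_def using A by auto
    ultimately show ?thesis by simp
  qed
  moreover have "reduces (W_A n V Vs A) T" using Mk[of "\<lambda>_. 0"] by (simp add: prod_pow_zero)
  moreover have "reduces (H_A n V Vs A) T"
  proof -
    define E where "E i = (if i \<in> A then D i else U i)" for i
    have blE: "bounded_linear (E i)" if "i \<in> {1..n}" for i unfolding E_def using that blD blU by auto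
    interpret projfam E "{1..n}"
    proof
      fix j x y assume "j \<in> {1..n}" thus "cinner (E j x) y = cinner x (E j y)"
        unfolding E_def using D_sa U_sa by auto
    next
      fix j x assume "j \<in> {1..n}" thus "E j (E j x) = E j x"
        unfolding E_def using D_idem U_idem by auto
    next
      fix j l x assume jl: "j \<in> {1..n}" "l \<in> {1..n}"
      show "E j (E l x) = E l (E j x)"
      proof (cases "j = l")
        case True thus ?thesis by simp
      next
        case False
        have c: "\<And>m y. E j (P l m y) = P l m (E j y)"
          unfolding E_def using P_comm_other[OF jl(1) jl(2) False] by auto
        show ?thesis using comm_gen[OF jl(2) blE[OF jl(1)] c] unfolding E_def[of l] by auto
      qed
    qed
    have "reduces {x. \<forall>j\<in>{1..n}. E j x = x} T"
      by (rule reduces_fam[OF _ linT]) (auto simp: E_def TU)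
    moreover have "{x. \<forall>j\<in>{1..n}. E j x = x} = H_A n V Vs A"
      unfolding HA_char[OF A] E_def using A by auto
    ultimately show ?thesis by simp
  qed
  ultimately show ?thesis by blast
qed

end

theorem proposition3p10:
  fixes n :: nat
    and z :: "nat \<Rightarrow> nat \<Rightarrow> complex"
    and V Vs :: "nat \<Rightarrow> 'a::chilbert_space \<Rightarrow> 'a"
    and T :: "'a \<Rightarrow> 'a"
  assumes "n \<ge> 1"
    and "doubly_noncommuting n z V Vs"
    and "bounded_clinear T"
    and "\<forall>i\<in>{1..n}. \<forall>k\<ge>1. T \<circ> ((V i ^^ k) \<circ> (Vs i ^^ k)) = ((V i ^^ k) \<circ> (Vs i ^^ k)) \<circ> T"
  shows "\<forall>A\<subseteq>{1..n}.
           (\<forall>k::nat \<Rightarrow> nat. reduces (prod_pow V A k ` W_A n V Vs A) T)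
           \<and> reduces (W_A n V Vs A) T
           \<and> reduces (H_A n V Vs A) T"
proof -
  interpret dnc n z V Vs using assms(2) by unfold_locales
  have TP: "T (P i m x) = P i m (T x)" if "i \<in> {1..n}" for i m x
  proof (cases "m = 0")
    case True thus ?thesis by (simp add: P0)
  next
    case False
    hence "T \<circ> ((V i ^^ m) \<circ> (Vs i ^^ m)) = ((V i ^^ m) \<circ> (Vs i ^^ m)) \<circ> T"
      using assms(4) that by simp
    thus ?thesis unfolding P_apply by (metis comp_apply)
  qed
  show ?thesis using main[OF assms(3) TP] by blast
qed


end
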